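(* Let $d \ge 1$ and let $P \subseteq \mathbb{R}^d$ be a $d$-dimensional lattice polytope (i.e. all vertices of $P$ lie in $\mathbb{Z}^d$) such that every facet of $P$ is a simplex and the interior of $P$ contains no point of $\mathbb{Z}^d$. Then $P$ has at most $2^d$ vertices.
   Context: A polytope whose interior contains no lattice point is called hollow; a polytope all of whose facets are simplices is called simplicial. *)

theory Defs
  imports "HOL-Analysis.Analysis"
begin

definition lattice_point :: "real ^ 'n \<Rightarrow> bool" where
  "lattice_point x \<longleftrightarrow> (\<forall>i. x $ i \<in> \<int>)"

definition lattice_polytope :: "(real ^ 'n) set \<Rightarrow> bool" where
  "lattice_polytope P \<longleftrightarrow> (\<exists>V. finite V \<and> (\<forall>v\<in>V. lattice_point v) \<and> P = convex hull V)"

definition hollow :: "(real ^ 'n) set \<Rightarrow> bool" where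
  "hollow P \<longleftrightarrow> (\<forall>x\<in>interior P. \<not> lattice_point x)"

definition simplicial :: "(real ^ 'n) set \<Rightarrow> bool" where
  "simplicial P \<longleftrightarrow> (\<forall>F. F facet_of P \<longrightarrow> (\<exists>k. k simplex F))"

end

theory Submission
  imports Defs
begin

lemma norm_sq_int:
  fixes t :: "real ^ 'n"
  assumes "lattice_point t"
  shows "norm t ^ 2 \<in> \<int>"
proof -
  have "norm t ^ 2 = (\<Sum>i\<in>UNIV. t $ i * t $ i)"
    by (simp add: power2_norm_eq_inner inner_vec_def)
  also have "\<dots> \<in> \<int>" using assms unfolding lattice_point_def
    by (intro Ints_sum Ints_mult) auto
  finally show ?thesis .
qed

lemma midpoint_norm_less:
  fixes x y :: "'a::real_inner"
  assumes "x \<noteq> y"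
  shows "norm (midpoint x y) ^ 2 < (norm x ^ 2 + norm y ^ 2) / 2"
proof -
  have a: "norm (midpoint x y) = norm (x + y) / 2" by (simp add: midpoint_def)
  have b: "(norm (x + y))^2 = 2 * (norm x)^2 + 2 * (norm y)^2 - (norm (x - y))^2"
    using dot_norm[of x y] dot_norm_neg[of x y] by (simp add: field_simps)
  have c: "0 < norm (x - y) ^ 2" using assms by simp
  show ?thesis unfolding a power_divide using b c by simp
qed

lemma aff_step:
  fixes A :: "'a::euclidean_space set"
  assumes ind: "\<not> affine_dependent A" and xA: "x \<in> A" and yA: "y \<in> A" and xy: "x \<noteq> y"
  shows "midpoint x y \<notin> A" and "\<not> affine_dependent (insert (midpoint x y) (A - {y}))"
proof -
  let ?m = "midpoint x y"
  have mx: "?m \<noteq> x" and my: "?m \<noteq> y" using xy by auto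
  have m_eq: "?m = (1/2) *\<^sub>R x + (1/2) *\<^sub>R y"
    by (simp add: midpoint_def scaleR_add_right)
  have mhull: "?m \<in> affine hull B" if "x \<in> B" "y \<in> B" for B
  proof -
    have "x \<in> affine hull B" "y \<in> affine hull B" using that by (auto intro: hull_inc)
    then show ?thesis unfolding m_eq
      by (intro mem_affine) (auto simp: affine_affine_hull)
  qed
  show mA: "?m \<notin> A"
  proof
    assume "?m \<in> A"
    moreover have "?m \<in> affine hull (A - {?m})"
      using mhull[of "A - {?m}"] xA yA mx my by auto
    ultimately have "affine_dependent A" unfolding affine_dependent_def by blast
    with ind show False by simp
  qed
  let ?A = "insert ?m (A - {y})"
  have fin: "finite A" using ind aff_independent_finite by blast
  have h1: "affine hull ?A \<subseteq> affine hull A"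
  proof (rule hull_minimal)
    have "?m \<in> affine hull A" using mhull[of A] xA yA by simp
    moreover have "A - {y} \<subseteq> affine hull A" by (meson Diff_subset hull_subset subset_trans)
    ultimately show "?A \<subseteq> affine hull A" by simp
  qed (rule affine_affine_hull)
  have h2: "affine hull A \<subseteq> affine hull ?A"
  proof (rule hull_minimal)
    have y_eq: "y = 2 *\<^sub>R ?m + (-1) *\<^sub>R x"
      by (simp add: midpoint_def scaleR_add_right)
    have "?m \<in> affine hull ?A" "x \<in> affine hull ?A" using xA xy by (auto intro: hull_inc)
    then have "2 *\<^sub>R ?m + (-1) *\<^sub>R x \<in> affine hull ?A"
      by (intro mem_affine) (auto simp: affine_affine_hull)
    then have "y \<in> affine hull ?A" using y_eq by metis
    moreover have "A - {y} \<subseteq> affine hull ?A" by (meson subset_insertI hull_subset subset_trans)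
    ultimately show "A \<subseteq> affine hull ?A" by blast
  qed (rule affine_affine_hull)
  have "affine hull ?A = affine hull A" using h1 h2 by (rule antisym)
  then have ad: "aff_dim ?A = aff_dim A" by (metis aff_dim_affine_hull)
  have "card A > 0" using fin yA card_gt_0_iff by blast
  then have "card ?A = card A" using fin mA yA by (simp add: card.insert_remove)
  then show "\<not> affine_dependent ?A"
    using ind fin ad by (simp add: affine_independent_iff_card)
qed
theorem theorem2p2:
  fixes P :: "(real ^ 'n) set"
  assumes "lattice_polytope P"
    and "aff_dim P = int CARD('n)"
    and "simplicial P"
    and "hollow P"
  shows "card {v. v extreme_point_of P} \<le> 2 ^ CARD('n)"
proof -
  obtain W where W: "finite W" "\<forall>v\<in>W. lattice_point v" "P = convex hull W"
    using assms(1) unfolding lattice_polytope_def by blast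
  define V where "V = {v. v extreme_point_of P}"
  have VW: "V \<subseteq> W" unfolding V_def W(3) using extreme_point_of_convex_hull by blast
  have finV: "finite V" using VW W(1) finite_subset by blast
  have polyP: "polyhedron P" using W by (intro polytope_imp_polyhedron) (auto simp: polytope_def)
  have convP: "convex P" using W(3) by simp
  have closedP: "closed P" using W by (simp add: compact_convex_hull compact_imp_closed finite_imp_compact)
  have ri: "rel_interior P = interior P"
    using assms(2) by (intro rel_interior_interior) (simp add: aff_dim_eq_full[symmetric])
  have infacet: "\<exists>F. F facet_of P \<and> z \<in> F" if "z \<in> P" "lattice_point z" for z
  proof -
    have "z \<notin> interior P" using assms(4) that unfolding hollow_def by blast
    then have "z \<in> rel_frontier P" using that closedP ri by (simp add: rel_frontier_def)
    then show ?thesis using rel_frontier_of_polyhedron[OF polyP] by blast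
  qed
  define Good where "Good T \<longleftrightarrow> finite T \<and> card T = card V \<and> T \<subseteq> P \<and> (\<forall>t\<in>T. lattice_point t)
      \<and> (\<forall>F. F facet_of P \<longrightarrow> \<not> affine_dependent (T \<inter> F))" for T
  define mu where "mu T = nat \<lfloor>\<Sum>t\<in>T. norm t ^ 2\<rfloor>" for T :: "(real^'n) set"
  have GV: "Good V"
    unfolding Good_def
  proof (intro conjI allI impI ballI)
    show "finite V" by (rule finV)
    show "V \<subseteq> P" unfolding V_def using extreme_point_of_def by blast
    show "lattice_point t" if "t \<in> V" for t using that VW W(2) by blast
    fix F assume F: "F facet_of P"
    then obtain k where "k simplex F" using assms(3) unfolding simplicial_def by blast
    then obtain C where C: "\<not> affine_dependent C" "F = convex hull C" unfolding simplex_def by blast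
    have "V \<inter> F \<subseteq> C"
    proof
      fix v assume "v \<in> V \<inter> F"
      then have "v extreme_point_of F"
        using extreme_point_of_face[OF facet_of_imp_face_of[OF F]] unfolding V_def by blast
      then show "v \<in> C" using C(2) extreme_point_of_convex_hull by blast
    qed
    then show "\<not> affine_dependent (V \<inter> F)" using C(1) affine_dependent_subset by blast
  qed simp
  obtain T where GT: "Good T" and Tmin: "\<And>T'. Good T' \<Longrightarrow> mu T \<le> mu T'"
    using ex_has_least_nat[of Good V mu] GV by blast
  have Tfin: "finite T" and Tcard: "card T = card V" and TP: "T \<subseteq> P"
    and Tlat: "\<forall>t\<in>T. lattice_point t"
    and Tind: "\<And>F. F facet_of P \<Longrightarrow> \<not> affine_dependent (T \<inter> F)"
    using GT unfolding Good_def by auto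
  define par where "par t = {i. odd \<lfloor>t $ i\<rfloor>}" for t :: "real^'n"
  have key: False if xT: "x \<in> T" and yT: "y \<in> T" and xy: "x \<noteq> y" and pe: "par x = par y"
      and le: "norm x ^ 2 \<le> norm y ^ 2" for x y
  proof -
    define m where "m = midpoint x y"
    have latm: "lattice_point m" unfolding lattice_point_def
    proof
      fix i
      obtain a where a: "x $ i = of_int a"
        using Tlat xT unfolding lattice_point_def by (meson Ints_cases)
      obtain b where b: "y $ i = of_int b"
        using Tlat yT unfolding lattice_point_def by (meson Ints_cases)
      have "odd \<lfloor>x $ i\<rfloor> \<longleftrightarrow> odd \<lfloor>y $ i\<rfloor>" using pe unfolding par_def by blast
      then have "odd a \<longleftrightarrow> odd b" by (simp add: a b)
      then have "even (a + b)" by auto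
      then obtain k where k: "a + b = 2 * k" by blast
      have "real_of_int (a + b) = real_of_int (2 * k)" using k by simp
      then have ab: "real_of_int a + real_of_int b = 2 * real_of_int k" by simp
      have "m $ i = (x $ i + y $ i) / 2" by (simp add: m_def midpoint_def)
      also have "\<dots> = of_int k" unfolding a b ab by simp
      finally show "m $ i \<in> \<int>" by simp
    qed
    have mP: "m \<in> P"
      using convP TP xT yT unfolding m_def
      by (meson convex_contains_segment midpoint_in_closed_segment subsetD)
    obtain F0 where F0: "F0 facet_of P" "m \<in> F0" using infacet[OF mP latm] by blast
    have mseg: "m \<in> open_segment x y" using xy by (simp add: m_def)
    have xyF: "x \<in> F" "y \<in> F" if "F facet_of P" "m \<in> F" for F
      using facet_of_imp_face_of[OF that(1)] that(2) mseg TP xT yT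
      unfolding face_of_def by blast+
    have mT: "m \<notin> T"
      using aff_step(1)[OF Tind[OF F0(1)], of x y] xyF[OF F0] xT yT xy F0(2)
      unfolding m_def by blast
    define T' where "T' = insert m (T - {y})"
    have GT': "Good T'" unfolding Good_def
    proof (intro conjI allI impI ballI)
      show "finite T'" using Tfin by (simp add: T'_def)
      have "card T > 0" using Tfin yT card_gt_0_iff by blast
      then show "card T' = card V" using Tfin mT yT Tcard by (simp add: T'_def card.insert_remove)
      show "T' \<subseteq> P" using TP mP by (auto simp: T'_def)
      show "lattice_point t" if "t \<in> T'" for t using that Tlat latm by (auto simp: T'_def)
      fix F assume F: "F facet_of P"
      show "\<not> affine_dependent (T' \<inter> F)"
      proof (cases "m \<in> F")
        case True
        have "T' \<inter> F = insert (midpoint x y) ((T \<inter> F) - {y})"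
          using True by (auto simp: T'_def m_def)
        then show ?thesis using aff_step(2)[OF Tind[OF F], of x y] xyF[OF F True] xT yT xy by simp
      next
        case False
        have "T' \<inter> F \<subseteq> T \<inter> F" using False by (auto simp: T'_def)
        then show ?thesis using Tind[OF F] affine_dependent_subset by blast
      qed
    qed
    have s1: "(\<Sum>t\<in>T'. norm t ^ 2) = (\<Sum>t\<in>T - {y}. norm t ^ 2) + norm m ^ 2"
      using Tfin mT by (simp add: T'_def)
    have s2: "(\<Sum>t\<in>T. norm t ^ 2) = (\<Sum>t\<in>T - {y}. norm t ^ 2) + norm y ^ 2"
      using Tfin yT by (simp add: sum.remove)
    have "norm m ^ 2 < norm y ^ 2"
    proof -
      have aux: "\<And>a b c::real. a < (b + c) / 2 \<Longrightarrow> b \<le> c \<Longrightarrow> a < c" by simp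
      show ?thesis using aux[OF midpoint_norm_less[OF xy] le] unfolding m_def .
    qed
    then have lt: "(\<Sum>t\<in>T'. norm t ^ 2) < (\<Sum>t\<in>T. norm t ^ 2)" using s1 s2 by linarith
    have i1: "(\<Sum>t\<in>T'. norm t ^ 2) \<in> \<int>"
      using GT' unfolding Good_def by (intro Ints_sum norm_sq_int) auto
    have i2: "(\<Sum>t\<in>T. norm t ^ 2) \<in> \<int>"
      using Tlat by (intro Ints_sum norm_sq_int) auto
    have nn: "0 \<le> (\<Sum>t\<in>T'. norm t ^ 2)" by (simp add: sum_nonneg)
    obtain p where p: "(\<Sum>t\<in>T'. norm t ^ 2) = of_int p" using i1 by (meson Ints_cases)
    obtain q where q: "(\<Sum>t\<in>T. norm t ^ 2) = of_int q" using i2 by (meson Ints_cases)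
    have "p < q" "0 \<le> p" using lt nn unfolding p q by simp_all
    then have "mu T' < mu T" unfolding mu_def p q by simp
    with Tmin[OF GT'] show False by simp
  qed
  have inj: "inj_on par T"
  proof (rule inj_onI)
    fix x y assume "x \<in> T" "y \<in> T" "par x = par y"
    then show "x = y"
      using key[of x y] key[of y x] by (cases "norm x ^ 2 \<le> norm y ^ 2") auto
  qed
  have "card V = card (par ` T)" using Tcard card_image[OF inj] by simp
  also have "\<dots> \<le> card (Pow (UNIV :: 'n set))"
    by (rule card_mono) auto
  also have "\<dots> = 2 ^ CARD('n)" by (simp add: card_Pow)
  finally show ?thesis unfolding V_def .
qed

end
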